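(* Let $R$ be an orientable flat surface given by a holomorphic Abelian differential on a compact genus $g$ surface, and let $T$ be a geodesic triangulation of $R$ (by saddle connections, vertices at zeros). Orient each edge of $T$ so that its $x$-component is positive (for vertical edges the orientation is not defined). Let $W$ be a subset of the edges of $T$. Then there exists an integral multicurve $\Delta$ on $R$ such that: (a) $\Delta$ is disjoint from the vertices of $T$ and transverse to the edges; (b) $\Delta$ crosses each edge of $W$ at least once; (c) each time $\Delta$ crosses an edge $e\in W$, the crossing is from left to right with respect to the orientation of $e$; if $e$ is vertical, all crossings are from the same side; (d) for each edge $e$ of $T$, the intersection number $i(\Delta,e)\le n$, where $n$ depends only on $g$.
   Context: An integral multicurve is a finite set of oriented closed curves with integer weights (a negative weight corresponds to reversing orientation). The $x$-component of an edge refers to the real part of its holonomy (period of the Abelian differential along it). *)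

theory Defs
  imports "HOL-Analysis.Analysis"
begin

text \<open>A half-edge (side) is a pair
  (t,i) with t in Tris and i in {0,1,2}; hol h is the holonomy (period of the Abelian
  differential) of side h, traversed counterclockwise around its triangle, so that the
  triangle lies to the LEFT of hol h.  glue h is the side of the adjacent triangle glued
  to h (same saddle connection, opposite direction).\<close>

type_synonym hedge = "nat \<times> nat"

definition hedges :: "nat set \<Rightarrow> hedge set" where
  "hedges Tris = Tris \<times> {0,1,2}"

definition nxt :: "hedge \<Rightarrow> hedge" where
  "nxt h = (fst h, (snd h + 1) mod 3)"

definition prv :: "hedge \<Rightarrow> hedge" where
  "prv h = (fst h, (snd h + 2) mod 3)"

text \<open>Rotation around the vertex at the start point of a half-edge.\<close>
definition rot :: "(hedge \<Rightarrow> hedge) \<Rightarrow> hedge \<Rightarrow> hedge" where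
  "rot glue h = nxt (glue h)"

text \<open>Vertices of the triangulation = classes of corners (start points of half-edges).\<close>
definition vertex_classes :: "nat set \<Rightarrow> (hedge \<Rightarrow> hedge) \<Rightarrow> hedge set set" where
  "vertex_classes Tris glue = hedges Tris // ({(h, rot glue h) | h. h \<in> hedges Tris}\<^sup>*)"

text \<open>Interior angle of the triangle at the start point of side h.\<close>
definition corner_angle :: "(hedge \<Rightarrow> complex) \<Rightarrow> hedge \<Rightarrow> real" where
  "corner_angle hol h = Arg (- hol (prv h) / hol h)"

definition cone_angle :: "(hedge \<Rightarrow> complex) \<Rightarrow> hedge set \<Rightarrow> real" where
  "cone_angle hol C = (\<Sum>h\<in>C. corner_angle hol h)"

definition edges :: "nat set \<Rightarrow> (hedge \<Rightarrow> hedge) \<Rightarrow> hedge set set" where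
  "edges Tris glue = {{h, glue h} | h. h \<in> hedges Tris}"

text \<open>Tris, hol, glue describe a geodesic triangulation (by saddle connections, vertices
  at the zeros) of a connected compact translation surface (= surface with a holomorphic
  Abelian differential) of genus g.\<close>
definition flat_triangulation ::
  "nat \<Rightarrow> nat set \<Rightarrow> (hedge \<Rightarrow> complex) \<Rightarrow> (hedge \<Rightarrow> hedge) \<Rightarrow> bool" where
  "flat_triangulation g Tris hol glue \<longleftrightarrow>
     finite Tris \<and> Tris \<noteq> {} \<and>
     (\<forall>t\<in>Tris. hol (t,0) + hol (t,1) + hol (t,2) = 0 \<and>
                Im (cnj (hol (t,0)) * hol (t,1)) > 0) \<and>
     (\<forall>h\<in>hedges Tris. glue h \<in> hedges Tris \<and> glue (glue h) = h \<and> glue h \<noteq> h \<and>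
                      hol (glue h) = - hol h) \<and>
     \<comment> \<open>connectedness of the surface\<close>
     (\<forall>t\<in>Tris. \<forall>t'\<in>Tris.
        (t, t') \<in> {(fst h, fst (glue h)) | h. h \<in> hedges Tris}\<^sup>*) \<and>
     \<comment> \<open>Euler characteristic: V - E + F = 2 - 2g\<close>
     int (card (vertex_classes Tris glue)) - int (card (edges Tris glue)) + int (card Tris)
        = 2 - 2 * int g \<and>
     \<comment> \<open>every vertex is a zero of the differential (cone angle different from 2 pi)\<close>
     (\<forall>C\<in>vertex_classes Tris glue. cone_angle hol C \<noteq> 2 * pi)"

text \<open>A closed curve transverse to the edges and disjoint from the vertices, recorded by the
  cyclic sequence of sides through which it successively exits triangles.  After exiting
  through h it is in triangle fst (glue h), which it must exit next.\<close>
definition transverse_closed_curve :: "nat set \<Rightarrow> (hedge \<Rightarrow> hedge) \<Rightarrow> hedge list \<Rightarrow> bool" where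
  "transverse_closed_curve Tris glue c \<longleftrightarrow>
     c \<noteq> [] \<and> set c \<subseteq> hedges Tris \<and>
     (\<forall>j < length c. fst (c ! ((j + 1) mod length c)) = fst (glue (c ! j)))"

text \<open>An integral multicurve: finitely many oriented closed curves with integer weights
  (negative weight = reversed orientation).\<close>
type_synonym multicurve = "(int \<times> hedge list) list"

definition transverse_multicurve :: "nat set \<Rightarrow> (hedge \<Rightarrow> hedge) \<Rightarrow> multicurve \<Rightarrow> bool" where
  "transverse_multicurve Tris glue \<Delta> \<longleftrightarrow> (\<forall>(w, c)\<in>set \<Delta>. transverse_closed_curve Tris glue c)"

text \<open>Side through which the weighted component actually exits (orientation reversed if w < 0).
  Exiting the triangle through h means crossing the edge from the left to the right of hol h.\<close>
definition eff_exit :: "(hedge \<Rightarrow> hedge) \<Rightarrow> int \<Rightarrow> hedge \<Rightarrow> hedge" where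
  "eff_exit glue w h = (if w > 0 then h else glue h)"

definition crossing_exits :: "(hedge \<Rightarrow> hedge) \<Rightarrow> multicurve \<Rightarrow> hedge set \<Rightarrow> hedge set" where
  "crossing_exits glue \<Delta> e =
     {eff_exit glue w h | w c h. (w, c) \<in> set \<Delta> \<and> w \<noteq> 0 \<and> h \<in> set c \<and> h \<in> e}"

definition inter_num :: "multicurve \<Rightarrow> hedge set \<Rightarrow> int" where
  "inter_num \<Delta> e = sum_list (map (\<lambda>(w, c). \<bar>w\<bar> * int (length (filter (\<lambda>h. h \<in> e) c))) \<Delta>)"

end

theory Submission
  imports Defs "HOL-Analysis.Analysis"
begin

fun chain :: "(hedge \<Rightarrow> hedge) \<Rightarrow> nat \<Rightarrow> hedge list \<Rightarrow> nat \<Rightarrow> bool" where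
  "chain gl a [] b = (a = b)"
| "chain gl a (h # p) b = (fst h = a \<and> chain gl (fst (gl h)) p b)"

lemma chain_append: "chain gl a (p @ q) b \<longleftrightarrow> (\<exists>m. chain gl a p m \<and> chain gl m q b)"
  by (induction p arbitrary: a) auto

lemma chain_nth: "chain gl a p b \<Longrightarrow> j < length p \<Longrightarrow>
   fst (gl (p ! j)) = (if Suc j < length p then fst (p ! Suc j) else b)"
proof (induction p arbitrary: a j)
  case Nil then show ?case by simp
next
  case (Cons h p)
  show ?case
  proof (cases j)
    case 0 then show ?thesis using Cons by (cases p) auto
  next
    case (Suc j') then show ?thesis using Cons by auto
  qed
qed

lemma hedges_mem: "h \<in> hedges T \<longleftrightarrow> fst h \<in> T \<and> snd h \<in> {0,1,2}"
  by (cases h) (auto simp: hedges_def)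

locale dg =
  fixes T :: "nat set" and gl :: "hedge \<Rightarrow> hedge" and L :: "hedge \<Rightarrow> real"
  assumes finT: "finite T"
  and gl_in: "\<And>h. h \<in> hedges T \<Longrightarrow> gl h \<in> hedges T"
  and gl_gl: "\<And>h. h \<in> hedges T \<Longrightarrow> gl (gl h) = h"
  and L_gl: "\<And>h. h \<in> hedges T \<Longrightarrow> L (gl h) = - L h"
  and L_nz: "\<And>h. h \<in> hedges T \<Longrightarrow> L h \<noteq> 0"
  and L_sum: "\<And>t. t \<in> T \<Longrightarrow> L (t,0) + L (t,1) + L (t,2) = 0"
begin

lemma chain_in: "chain gl a p b \<Longrightarrow> a \<in> T \<Longrightarrow> set p \<subseteq> hedges T \<Longrightarrow> b \<in> T"
proof (induction p arbitrary: a)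
  case Nil then show ?case by simp
next
  case (Cons h p)
  have "gl h \<in> hedges T" using Cons gl_in by auto
  then have "fst (gl h) \<in> T" by (simp add: hedges_mem)
  then show ?case using Cons by auto
qed

lemma cut:
  assumes ST: "S \<subseteq> T"
    and cl: "\<And>h. h \<in> hedges T \<Longrightarrow> fst h \<in> S \<Longrightarrow> L h > 0 \<Longrightarrow> fst (gl h) \<in> S"
    and h: "h \<in> hedges T" "fst h \<in> S"
  shows "fst (gl h) \<in> S"
proof (rule ccontr)
  assume nh: "fst (gl h) \<notin> S"
  define A where "A = S \<times> {0::nat,1,2}"
  define I where "I = {x\<in>A. fst (gl x) \<in> S}"
  define B where "B = {x\<in>A. fst (gl x) \<notin> S}"
  have finS: "finite S" using ST finT finite_subset by blast
  have finA: "finite A" using finS by (simp add: A_def)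
  have AH: "A \<subseteq> hedges T" using ST by (auto simp: A_def hedges_def)
  have "sum L A = (\<Sum>t\<in>S. \<Sum>i\<in>{0::nat,1,2}. L (t,i))"
    unfolding A_def by (simp only: sum.cartesian_product case_prod_eta)
  also have "\<dots> = 0" using L_sum ST by (intro sum.neutral) (auto simp: add.assoc[symmetric])
  finally have s0: "sum L A = 0" .
  have AIB: "A = I \<union> B" "I \<inter> B = {}" by (auto simp: I_def B_def)
  have finI: "finite I" "finite B" using finA by (auto simp: I_def B_def)
  have sIB: "sum L A = sum L I + sum L B"
    using AIB finI by (simp add: sum.union_disjoint)
  have glI: "\<And>x. x \<in> I \<Longrightarrow> gl x \<in> I"
  proof -
    fix x assume x: "x \<in> I"
    then have xH: "x \<in> hedges T" using AH by (auto simp: I_def)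
    then have "gl x \<in> hedges T" by (rule gl_in)
    moreover have "fst (gl x) \<in> S" using x by (auto simp: I_def)
    ultimately have "gl x \<in> A" by (auto simp: A_def hedges_mem mem_Times_iff)
    moreover have "fst (gl (gl x)) \<in> S" using x xH gl_gl by (auto simp: I_def A_def)
    ultimately show "gl x \<in> I" by (simp add: I_def)
  qed
  have "sum (\<lambda>x. L (gl x)) I = sum L I"
    apply (rule sum.reindex_bij_witness[where i=gl and j=gl])
    using glI gl_gl AH by (auto simp: I_def)
  moreover have "sum (\<lambda>x. L (gl x)) I = - sum L I"
    unfolding sum_negf[symmetric] using L_gl AH by (intro sum.cong) (auto simp: I_def)
  ultimately have sI: "sum L I = 0" by simp
  have hB: "h \<in> B" using h nh by (auto simp: B_def A_def hedges_mem mem_Times_iff)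
  have "0 < sum (\<lambda>x. - L x) B"
  proof (rule sum_pos)
    show "finite B" using finI by simp
    show "B \<noteq> {}" using hB by auto
    fix x assume x: "x \<in> B"
    then have xH: "x \<in> hedges T" and xs: "fst x \<in> S" and ng: "fst (gl x) \<notin> S"
      using AH by (auto simp: B_def A_def)
    have "\<not> L x > 0" using cl[OF xH xs] ng by auto
    moreover have "L x \<noteq> 0" using L_nz xH by auto
    ultimately show "0 < - L x" by simp
  qed
  then have "sum L B < 0" by (simp add: sum_negf)
  then show False using s0 sIB sI by simp
qed

definition spath :: "hedge list \<Rightarrow> nat \<Rightarrow> nat \<Rightarrow> bool" where
  "spath p a b \<longleftrightarrow> set p \<subseteq> hedges T \<and> (\<forall>x\<in>set p. L x > 0) \<and> chain gl a p b \<and>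
     distinct (map fst p) \<and> b \<notin> fst ` set p"

lemma spath_ext:
  assumes sp: "spath p a b" and h: "h \<in> hedges T" "fst h = b" "L h > 0"
  shows "\<exists>q. spath q a (fst (gl h))"
proof -
  let ?b = "fst (gl h)"
  consider "?b = b" | "?b \<in> fst ` set p" | "?b \<noteq> b" "?b \<notin> fst ` set p" by blast
  then show ?thesis
  proof cases
    case 1 then show ?thesis using sp by auto
  next
    case 2
    then obtain x where x: "x \<in> set p" "fst x = ?b" by auto
    then obtain p1 p2 where p: "p = p1 @ x # p2" by (meson split_list)
    from sp p obtain m where c1: "chain gl a p1 m" and c2: "chain gl m (x # p2) b"
      by (auto simp: spath_def chain_append)
    have "m = ?b" using c2 x by simp
    have "spath p1 a ?b"
      using sp p c1 \<open>m = ?b\<close> x by (auto simp: spath_def)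
    then show ?thesis by blast
  next
    case 3
    have "chain gl a (p @ [h]) ?b"
      using sp h by (auto simp: spath_def chain_append)
    then have "spath (p @ [h]) a ?b"
      using sp h 3 by (auto simp: spath_def)
    then show ?thesis by blast
  qed
qed

lemma cycle:
  assumes h: "h \<in> hedges T" "L h > 0"
  shows "\<exists>c. transverse_closed_curve T gl c \<and> distinct (map fst c) \<and>
             (\<forall>x\<in>set c. L x > 0) \<and> h \<in> set c"
proof -
  define a where "a = fst (gl h)"
  define S where "S = {b. \<exists>p. spath p a b}"
  have aT: "a \<in> T" using gl_in[OF h(1)] by (simp add: a_def hedges_mem)
  have ST: "S \<subseteq> T" using chain_in aT by (auto simp: S_def spath_def)
  have aS: "a \<in> S" unfolding S_def
    by (rule CollectI, rule exI[of _ "[]"]) (simp add: spath_def)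
  have "fst (gl (gl h)) \<in> S"
  proof (rule cut[OF ST])
    fix x assume x: "x \<in> hedges T" "fst x \<in> S" "L x > 0"
    then obtain q where "spath q a (fst x)" by (auto simp: S_def)
    from spath_ext[OF this x(1) refl x(3)] show "fst (gl x) \<in> S" by (simp add: S_def)
  next
    show "gl h \<in> hedges T" using gl_in h by auto
    show "fst (gl h) \<in> S" using aS by (simp add: a_def)
  qed
  then obtain p where sp: "spath p a (fst h)" using gl_gl h by (auto simp: S_def)
  define c where "c = h # p"
  have ch: "chain gl (fst h) c (fst h)" using sp by (simp add: c_def spath_def a_def)
  have "transverse_closed_curve T gl c"
    unfolding transverse_closed_curve_def
  proof (intro conjI allI impI)
    show "c \<noteq> []" by (simp add: c_def)
    show "set c \<subseteq> hedges T" using sp h by (auto simp: c_def spath_def)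
    fix j assume j: "j < length c"
    show "fst (c ! ((j + 1) mod length c)) = fst (gl (c ! j))"
    proof (cases "Suc j < length c")
      case True then show ?thesis using chain_nth[OF ch j] by simp
    next
      case False
      then have "Suc j = length c" using j by simp
      then show ?thesis using chain_nth[OF ch j] by (simp add: c_def)
    qed
  qed
  moreover have "distinct (map fst c)" using sp by (auto simp: c_def spath_def)
  moreover have "\<forall>x\<in>set c. L x > 0" using sp h by (auto simp: c_def spath_def)
  ultimately show ?thesis unfolding c_def by (intro exI[of _ "h # p"]) simp
qed

end

lemma prv0: "prv (t,0) = (t,2)" by (simp add: prv_def)
lemma prv1: "prv (t,1) = (t,0)" by (simp add: prv_def)
lemma prv1': "prv (t,Suc 0) = (t,0)" by (simp add: prv_def)
lemma prv2: "prv (t,2) = (t,1)" by (simp add: prv_def)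
lemma Im_ndiv: "Im (- x / y) = Im (cnj x * y) / ((Re y)^2 + (Im y)^2)"
  by (simp only: Im_divide) (simp add: algebra_simps)
lemma den_pos: "y \<noteq> 0 \<Longrightarrow> (Re y)^2 + (Im y)^2 > 0"
  by (metis cmod_power2 zero_less_norm_iff zero_less_power)

lemma tri_alg:
  fixes a b c :: complex
  assumes s: "a + b + c = 0" and k: "Im (cnj a * b) > 0"
  shows "Im (cnj b * c) > 0 \<and> Im (cnj c * a) > 0 \<and> a \<noteq> 0 \<and> b \<noteq> 0 \<and> c \<noteq> 0"
proof -
  have c: "c = - a - b" using s by (simp add: algebra_simps eq_neg_iff_add_eq_0)
  have "Im (cnj b * c) = Im (cnj a * b)" "Im (cnj c * a) = Im (cnj a * b)"
    unfolding c by (simp_all add: algebra_simps)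
  moreover have "a \<noteq> 0" "b \<noteq> 0" using k by auto
  moreover have "c \<noteq> 0"
  proof
    assume "c = 0" then have "b = - a" using c by simp
    then show False using k by (simp add: algebra_simps)
  qed
  ultimately show ?thesis using k by simp
qed

lemma cis_sum: "finite A \<Longrightarrow> cis (sum f A) = (\<Prod>x\<in>A. cis (f x))"
  by (induction rule: finite_induct) (simp_all add: cis_mult[symmetric])

lemma sgn_prod_c: "finite A \<Longrightarrow> (\<Prod>x\<in>A. sgn (f x)) = sgn (\<Prod>x\<in>A. f x :: complex)"
  by (induction rule: finite_induct) (simp_all add: sgn_mult)

lemma cis_eq_1: "cis x = 1 \<Longrightarrow> \<exists>k::int. x = of_int (2 * k) * pi"
proof -
  assume "cis x = 1"
  then have "exp (\<i> * of_real x) = 1" by (simp add: cis_conv_exp)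
  then show ?thesis by (simp add: exp_eq_1)
qed

lemma prv_nxt: "h \<in> hedges T \<Longrightarrow> prv (nxt h) = h"
  by (cases h) (auto simp: hedges_mem prv_def nxt_def)

lemma nxt_in: "h \<in> hedges T \<Longrightarrow> nxt h \<in> hedges T"
  by (cases h) (auto simp: hedges_mem nxt_def)

context
  fixes g Tris hol glue
  assumes ft: "flat_triangulation g Tris hol glue"
begin

lemma finT: "finite Tris" using ft by (simp add: flat_triangulation_def)

lemma tri: "t \<in> Tris \<Longrightarrow> hol (t,0) + hol (t,1) + hol (t,2) = 0 \<and> Im (cnj (hol (t,0)) * hol (t,1)) > 0"
  using ft by (simp add: flat_triangulation_def)

lemma glue: "h \<in> hedges Tris \<Longrightarrow> glue h \<in> hedges Tris \<and> glue (glue h) = h \<and> glue h \<noteq> h \<and> hol (glue h) = - hol h"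
  using ft by (simp add: flat_triangulation_def)

lemma euler: "int (card (vertex_classes Tris glue)) - int (card (edges Tris glue)) + int (card Tris) = 2 - 2 * int g"
  using ft by (simp add: flat_triangulation_def)

lemma cone: "C \<in> vertex_classes Tris glue \<Longrightarrow> cone_angle hol C \<noteq> 2 * pi"
  using ft by (simp add: flat_triangulation_def)

lemma finH: "finite (hedges Tris)" using finT by (simp add: hedges_def)

lemma corner_Im: assumes h: "h \<in> hedges Tris"
  shows "Im (- hol (prv h) / hol h) > 0 \<and> hol h \<noteq> 0"
proof -
  obtain t i where hti: "h = (t,i)" by (cases h)
  have t: "t \<in> Tris" and i: "i \<in> {0,1,2}" using h hti by (auto simp: hedges_mem)
  from tri[OF t] have s: "hol (t,0) + hol (t,1) + hol (t,2) = 0" and k: "Im (cnj (hol (t,0)) * hol (t,1)) > 0" by auto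
  note A = tri_alg[OF s k]
  have num: "Im (cnj (hol (prv h)) * hol h) > 0"
    using i A k by (auto simp: hti prv0 prv1 prv1' prv2)
  have nz: "hol h \<noteq> 0" using i A by (auto simp: hti)
  show ?thesis unfolding Im_ndiv using num den_pos[OF nz] nz by simp
qed

lemma Arg_corner: "h \<in> hedges Tris \<Longrightarrow> 0 < corner_angle hol h \<and> corner_angle hol h < pi"
  using corner_Im Arg_lt_pi by (simp add: corner_angle_def)

lemma tri_angle: assumes t: "t \<in> Tris"
  shows "corner_angle hol (t,0) + corner_angle hol (t,1) + corner_angle hol (t,2) = pi"
proof -
  have hs: "(t,0) \<in> hedges Tris" "(t,1) \<in> hedges Tris" "(t,2) \<in> hedges Tris" using t by (auto simp: hedges_mem)
  define z0 where "z0 = - hol (t,2) / hol (t,0)"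
  define z1 where "z1 = - hol (t,0) / hol (t,1)"
  define z2 where "z2 = - hol (t,1) / hol (t,2)"
  have nz: "hol (t,0) \<noteq> 0" "hol (t,1) \<noteq> 0" "hol (t,2) \<noteq> 0" using corner_Im hs by auto
  have zz: "z0 * z1 * z2 = -1" using nz by (simp add: z0_def z1_def z2_def field_simps)
  have zn: "z0 \<noteq> 0" "z1 \<noteq> 0" "z2 \<noteq> 0" using nz by (auto simp: z0_def z1_def z2_def)
  have ca: "corner_angle hol (t,0) = Arg z0" "corner_angle hol (t,1) = Arg z1" "corner_angle hol (t,2) = Arg z2"
    unfolding corner_angle_def prv0 prv1 prv2 z0_def z1_def z2_def by (rule refl)+
  define s where "s = Arg z0 + Arg z1 + Arg z2"
  have "cis s = sgn z0 * sgn z1 * sgn z2"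
    using zn by (simp add: s_def cis_mult[symmetric] cis_Arg)
  also have "\<dots> = sgn (z0 * z1 * z2)" by (simp add: sgn_mult)
  also have "\<dots> = -1" using zz by simp
  finally have "cis s = -1" .
  then have "cis (s - pi) = 1" by (simp add: cis_divide[symmetric])
  then obtain k :: int where k: "s - pi = of_int (2*k) * pi" using cis_eq_1 by blast
  have b: "0 < s" "s < 3 * pi" using Arg_corner[OF hs(1)] Arg_corner[OF hs(2)] Arg_corner[OF hs(3)]
    unfolding s_def ca by linarith+
  have "of_int (2*k) * pi > -1 * pi" using k b by linarith
  then have "of_int (2*k) > (-1::real)" using pi_gt_zero mult_less_cancel_right_pos by blast
  moreover have "of_int (2*k) * pi < 2 * pi" using k b by linarith
  then have "of_int (2*k) < (2::real)" using pi_gt_zero mult_less_cancel_right_pos by blast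
  ultimately have "k = 0" by linarith
  then have "s = pi" using k by simp
  then show ?thesis unfolding ca s_def .
qed

end

definition rr :: "nat set \<Rightarrow> (hedge \<Rightarrow> hedge) \<Rightarrow> (hedge \<times> hedge) set" where
  "rr T gl = {(h, rot gl h) | h. h \<in> hedges T}"

definition pp :: "nat set \<Rightarrow> (hedge \<Rightarrow> hedge) \<Rightarrow> hedge \<Rightarrow> hedge" where
  "pp T gl h = (if h \<in> hedges T then rot gl h else h)"

lemma rr_mem: "(a,b) \<in> rr T gl \<longleftrightarrow> a \<in> hedges T \<and> b = rot gl a"
proof
  assume "(a,b) \<in> rr T gl" then show "a \<in> hedges T \<and> b = rot gl a" by (auto simp: rr_def)
next
  assume "a \<in> hedges T \<and> b = rot gl a"
  then show "(a,b) \<in> rr T gl" unfolding rr_def by (intro CollectI exI[of _ a]) simp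
qed

context
  fixes g Tris hol glue
  assumes ft: "flat_triangulation g Tris hol glue"
begin

lemma rot_in: "h \<in> hedges Tris \<Longrightarrow> rot glue h \<in> hedges Tris"
  using glue[OF ft] nxt_in by (simp add: rot_def)

lemma rot_inj: "inj_on (rot glue) (hedges Tris)"
proof (rule inj_onI)
  fix x y assume x: "x \<in> hedges Tris" and y: "y \<in> hedges Tris" and e: "rot glue x = rot glue y"
  have "prv (nxt (glue x)) = prv (nxt (glue y))" using e by (simp add: rot_def)
  then have "glue x = glue y" using prv_nxt glue[OF ft x] glue[OF ft y] by metis
  then have "glue (glue x) = glue (glue y)" by simp
  then show "x = y" using glue[OF ft x] glue[OF ft y] by simp
qed

lemma pp_inj: "inj (pp Tris glue)"
proof (rule injI)
  fix x y assume e: "pp Tris glue x = pp Tris glue y"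
  show "x = y"
  proof (cases "x \<in> hedges Tris"; cases "y \<in> hedges Tris")
    assume "x \<in> hedges Tris" "y \<in> hedges Tris"
    then show ?thesis using e rot_inj by (auto simp: pp_def inj_on_def)
  next
    assume "x \<in> hedges Tris" "y \<notin> hedges Tris"
    then show ?thesis using e rot_in by (metis pp_def)
  next
    assume "x \<notin> hedges Tris" "y \<in> hedges Tris"
    then show ?thesis using e rot_in by (metis pp_def)
  next
    assume "x \<notin> hedges Tris" "y \<notin> hedges Tris"
    then show ?thesis using e by (auto simp: pp_def)
  qed
qed

lemma pp_pow_in: "x \<in> hedges Tris \<Longrightarrow> (pp Tris glue ^^ n) x \<in> hedges Tris"
  by (induction n) (auto simp: pp_def rot_in)

lemma rr_to_pow: "(x,y) \<in> (rr Tris glue)\<^sup>* \<Longrightarrow> x \<in> hedges Tris \<Longrightarrow> \<exists>n. y = (pp Tris glue ^^ n) x"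
proof (induction rule: rtrancl_induct)
  case base then show ?case by (intro exI[of _ 0]) simp
next
  case (step y z)
  then obtain n where n: "y = (pp Tris glue ^^ n) x" by auto
  from step have z: "z = rot glue y" and yH: "y \<in> hedges Tris" by (auto simp: rr_mem)
  have "z = (pp Tris glue ^^ Suc n) x" using n z yH by (simp add: pp_def)
  then show ?case by blast
qed

lemma pow_to_rr: "x \<in> hedges Tris \<Longrightarrow> (x, (pp Tris glue ^^ n) x) \<in> (rr Tris glue)\<^sup>*"
proof (induction n)
  case 0 then show ?case by simp
next
  case (Suc n)
  have yH: "(pp Tris glue ^^ n) x \<in> hedges Tris" using pp_pow_in Suc by blast
  then have "((pp Tris glue ^^ n) x, (pp Tris glue ^^ Suc n) x) \<in> rr Tris glue"
    by (simp add: rr_mem pp_def)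
  then show ?case using Suc by (meson rtrancl_into_rtrancl)
qed

lemma rr_sym: assumes xy: "(x,y) \<in> (rr Tris glue)\<^sup>*" and x: "x \<in> hedges Tris"
  shows "(y,x) \<in> (rr Tris glue)\<^sup>*"
proof -
  let ?p = "pp Tris glue"
  obtain n where n: "y = (?p ^^ n) x" using rr_to_pow xy x by blast
  have "{y. \<exists>n. y = (?p ^^ n) x} \<subseteq> hedges Tris"
  proof
    fix y assume "y \<in> {y. \<exists>n. y = (?p ^^ n) x}"
    then obtain m where "y = (?p ^^ m) x" by blast
    then show "y \<in> hedges Tris" using pp_pow_in[OF x, of m] by simp
  qed
  then have "finite {y. \<exists>n. y = (?p ^^ n) x}" using finH[OF ft] by (rule finite_subset)
  then obtain k where k: "k > 0" "(?p ^^ k) x = x" by (rule funpow_inj_finite[OF pp_inj])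
  have km: "\<And>m. (?p ^^ (k*m)) x = x"
  proof -
    fix m show "(?p ^^ (k*m)) x = x"
    proof (induction m)
      case 0 then show ?case by simp
    next
      case (Suc m)
      have "(?p ^^ (k * Suc m)) x = (?p ^^ k) ((?p ^^ (k*m)) x)"
        by (simp only: mult_Suc_right funpow_add comp_apply)
      then show ?case using Suc k by simp
    qed
  qed
  have kn: "k * n - n + n = k * n" using k by (simp add: Suc_le_eq)
  have "(?p ^^ (k*n - n)) y = (?p ^^ (k*n - n + n)) x" unfolding n funpow_add by simp
  also have "\<dots> = x" unfolding kn by (rule km)
  finally have e: "(?p ^^ (k*n - n)) y = x" .
  have yH: "y \<in> hedges Tris" using pp_pow_in[OF x, of n] unfolding n .
  show ?thesis using pow_to_rr[OF yH, of "k*n - n"] unfolding e .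
qed

lemma cls_sub: "x \<in> hedges Tris \<Longrightarrow> (rr Tris glue)\<^sup>* `` {x} \<subseteq> hedges Tris"
proof
  fix y assume x: "x \<in> hedges Tris" and "y \<in> (rr Tris glue)\<^sup>* `` {x}"
  then have "(x,y) \<in> (rr Tris glue)\<^sup>*" by simp
  then obtain n where "y = (pp Tris glue ^^ n) x" using rr_to_pow x by blast
  then show "y \<in> hedges Tris" using pp_pow_in x by simp
qed

lemma cls_rot: "x \<in> hedges Tris \<Longrightarrow> y \<in> (rr Tris glue)\<^sup>* `` {x} \<Longrightarrow> rot glue y \<in> (rr Tris glue)\<^sup>* `` {x}"
proof -
  assume x: "x \<in> hedges Tris" and y: "y \<in> (rr Tris glue)\<^sup>* `` {x}"
  then have "y \<in> hedges Tris" using cls_sub by blast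
  then have "(y, rot glue y) \<in> rr Tris glue" by (simp add: rr_mem)
  then show ?thesis using y by (meson Image_singleton_iff rtrancl_into_rtrancl)
qed

lemma cls_eq: assumes x: "x \<in> hedges Tris" and y: "y \<in> hedges Tris"
  and z: "z \<in> (rr Tris glue)\<^sup>* `` {x}" "z \<in> (rr Tris glue)\<^sup>* `` {y}"
  shows "(rr Tris glue)\<^sup>* `` {x} = (rr Tris glue)\<^sup>* `` {y}"
proof -
  have "(x,z) \<in> (rr Tris glue)\<^sup>*" "(y,z) \<in> (rr Tris glue)\<^sup>*" using z by auto
  then have xy: "(x,y) \<in> (rr Tris glue)\<^sup>*" "(y,x) \<in> (rr Tris glue)\<^sup>*"
    using rr_sym x y by (meson rtrancl_trans)+
  show ?thesis using xy by (auto intro: rtrancl_trans)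
qed

lemma cone_ge:
  assumes x: "x \<in> hedges Tris" and C: "C = (rr Tris glue)\<^sup>* `` {x}"
    and ne: "cone_angle hol C \<noteq> 2 * pi"
  shows "cone_angle hol C \<ge> 4 * pi"
proof -
  have CH: "C \<subseteq> hedges Tris" using cls_sub x C by simp
  have finC: "finite C" using CH finH[OF ft] finite_subset by blast
  have xC: "x \<in> C" using C by simp
  have rC: "rot glue ` C \<subseteq> C" using cls_rot x C by auto
  have injC: "inj_on (rot glue) C" using rot_inj CH inj_on_subset by blast
  have rCe: "rot glue ` C = C" using endo_inj_surj finC rC injC by blast
  define z where "z = (\<lambda>h. - hol (prv h) / hol h)"
  have key: "\<And>h. h \<in> C \<Longrightarrow> - hol (prv (rot glue h)) = hol h"
  proof -
    fix h assume "h \<in> C"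
    then have hH: "h \<in> hedges Tris" using CH by auto
    have "prv (rot glue h) = glue h" using prv_nxt[of "glue h" Tris] glue[OF ft hH] by (simp add: rot_def)
    then show "- hol (prv (rot glue h)) = hol h" using glue[OF ft hH] by simp
  qed
  have "(\<Prod>h\<in>C. - hol (prv h)) = (\<Prod>h\<in>rot glue ` C. - hol (prv h))" using rCe by simp
  also have "\<dots> = (\<Prod>h\<in>C. - hol (prv (rot glue h)))" using prod.reindex[OF injC] by simp
  also have "\<dots> = (\<Prod>h\<in>C. hol h)" using key by (intro prod.cong) auto
  finally have pe: "(\<Prod>h\<in>C. - hol (prv h)) = (\<Prod>h\<in>C. hol h)" .
  have nz: "(\<Prod>h\<in>C. hol h) \<noteq> 0" using corner_Im[OF ft] CH finC by (auto simp: prod_zero_iff)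
  have "(\<Prod>h\<in>C. z h) = (\<Prod>h\<in>C. - hol (prv h)) / (\<Prod>h\<in>C. hol h)"
    unfolding z_def by (rule prod_dividef)
  then have pz: "(\<Prod>h\<in>C. z h) = 1" using pe nz by simp
  have znz: "\<And>h. h \<in> C \<Longrightarrow> z h \<noteq> 0" using corner_Im[OF ft] CH unfolding z_def by force
  have "cis (cone_angle hol C) = (\<Prod>h\<in>C. cis (Arg (z h)))"
    unfolding cone_angle_def corner_angle_def z_def using finC by (simp add: cis_sum)
  also have "\<dots> = (\<Prod>h\<in>C. sgn (z h))" using znz cis_Arg by (intro prod.cong) auto
  also have "\<dots> = sgn (\<Prod>h\<in>C. z h)" using sgn_prod_c finC by blast
  also have "\<dots> = 1" using pz by simp
  finally obtain k :: int where k: "cone_angle hol C = of_int (2*k) * pi" using cis_eq_1 by blast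
  have pos: "cone_angle hol C > 0" unfolding cone_angle_def
    using Arg_corner[OF ft] CH finC xC by (intro sum_pos) auto
  have "k > 0"
  proof (rule ccontr)
    assume "\<not> k > 0" then have "of_int (2*k) \<le> (0::real)" by simp
    then have "of_int (2*k) * pi \<le> 0" using pi_gt_zero by (simp add: mult_nonpos_nonneg)
    then show False using pos k by simp
  qed
  moreover have "k \<noteq> 1" using ne k by auto
  ultimately have "k \<ge> 2" by simp
  then have "of_int (2*k) \<ge> (4::real)" by simp
  then have "of_int (2*k) * pi \<ge> 4 * pi" using pi_gt_zero by (simp add: mult_right_mono)
  then show ?thesis using k by simp
qed

end

lemma card2: "card {a, b} \<le> 2" by (cases "a = b") auto

context
  fixes g Tris hol glue
  assumes ft: "flat_triangulation g Tris hol glue"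
begin

lemma edges_img: "edges Tris glue = (\<lambda>h. {h, glue h}) ` hedges Tris"
  by (auto simp: edges_def)

lemma card_H: "card (hedges Tris) = 3 * card Tris"
  by (simp add: hedges_def card_cartesian_product)

lemma card_edges_le: "card (edges Tris glue) \<le> 3 * card Tris"
  using card_image_le[OF finH[OF ft], of "\<lambda>h. {h, glue h}"] card_H by (simp add: edges_img)

lemma card_edges_ge: "3 * card Tris \<le> 2 * card (edges Tris glue)"
proof -
  have finE: "finite (edges Tris glue)" using finH[OF ft] by (simp add: edges_img)
  have "hedges Tris \<subseteq> \<Union>(edges Tris glue)" by (auto simp: edges_def)
  moreover have "finite (\<Union>(edges Tris glue))" using finE by (auto simp: edges_def)
  ultimately have "card (hedges Tris) \<le> card (\<Union>(edges Tris glue))" by (rule card_mono[rotated])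
  also have "\<dots> \<le> sum card (edges Tris glue)" by (rule card_Union_le_sum_card)
  also have "\<dots> \<le> of_nat (card (edges Tris glue)) * 2"
    by (rule sum_bounded_above) (auto simp: edges_def card2)
  finally show ?thesis using card_H by simp
qed

lemma angle_total: "(\<Sum>h\<in>hedges Tris. corner_angle hol h) = pi * card Tris"
proof -
  have "(\<Sum>h\<in>hedges Tris. corner_angle hol h) = (\<Sum>t\<in>Tris. \<Sum>i\<in>{0::nat,1,2}. corner_angle hol (t,i))"
    unfolding hedges_def by (simp only: sum.cartesian_product case_prod_eta)
  also have "\<dots> = (\<Sum>t\<in>Tris. pi)"
    using tri_angle[OF ft] by (intro sum.cong) (auto simp: add.assoc[symmetric])
  finally show ?thesis by simp
qed

lemma vc_eq: "vertex_classes Tris glue = (\<lambda>x. (rr Tris glue)\<^sup>* `` {x}) ` hedges Tris"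
  by (auto simp: vertex_classes_def rr_def quotient_def)

lemma card_vc: "4 * card (vertex_classes Tris glue) \<le> card Tris"
proof -
  let ?Q = "vertex_classes Tris glue"
  have finQ: "finite ?Q" using finH[OF ft] by (simp add: vc_eq)
  have fin: "\<forall>C\<in>?Q. finite C"
  proof
    fix C assume "C \<in> ?Q"
    then obtain x where x: "x \<in> hedges Tris" "C = (rr Tris glue)\<^sup>* `` {x}" by (auto simp: vc_eq)
    show "finite C" unfolding x(2) using cls_sub[OF ft x(1)] finH[OF ft] by (rule finite_subset)
  qed
  have dis: "\<forall>A\<in>?Q. \<forall>B\<in>?Q. A \<noteq> B \<longrightarrow> A \<inter> B = {}"
  proof (intro ballI impI)
    fix A B assume "A \<in> ?Q" "B \<in> ?Q" "A \<noteq> B"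
    then obtain x y where x: "x \<in> hedges Tris" "A = (rr Tris glue)\<^sup>* `` {x}"
      and y: "y \<in> hedges Tris" "B = (rr Tris glue)\<^sup>* `` {y}" by (auto simp: vc_eq)
    show "A \<inter> B = {}"
    proof (rule ccontr)
      assume "A \<inter> B \<noteq> {}"
      then obtain z where "z \<in> A" "z \<in> B" by blast
      then have "A = B" using cls_eq[OF ft x(1) y(1)] x(2) y(2) by simp
      then show False using \<open>A \<noteq> B\<close> by simp
    qed
  qed
  have un: "\<Union>?Q = hedges Tris" using cls_sub[OF ft] by (auto simp: vc_eq)
  have "(\<Sum>h\<in>\<Union>?Q. corner_angle hol h) = (\<Sum>C\<in>?Q. \<Sum>h\<in>C. corner_angle hol h)"
    using sum.Union_disjoint[OF fin dis] by simp
  then have "pi * card Tris = (\<Sum>C\<in>?Q. cone_angle hol C)"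
    using angle_total un by (simp add: cone_angle_def)
  moreover have "of_nat (card ?Q) * (4 * pi) \<le> (\<Sum>C\<in>?Q. cone_angle hol C)"
  proof (rule sum_bounded_below)
    fix C assume C: "C \<in> ?Q"
    then obtain x where x: "x \<in> hedges Tris" "C = (rr Tris glue)\<^sup>* `` {x}" by (auto simp: vc_eq)
    show "4 * pi \<le> cone_angle hol C" using cone_ge[OF ft x] cone[OF ft C] by simp
  qed
  ultimately have "(4 * card ?Q) * pi \<le> card Tris * pi" by (simp add: algebra_simps)
  then have "real (4 * card ?Q) \<le> real (card Tris)" using pi_gt_zero by (simp add: mult_le_cancel_right)
  then show ?thesis by linarith
qed

lemma card_T_bound: "card Tris \<le> 8 * g"
proof -
  have e: "int (card (vertex_classes Tris glue)) - int (card (edges Tris glue)) + int (card Tris) = 2 - 2 * int g"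
    by (rule euler[OF ft])
  have a: "4 * int (card (vertex_classes Tris glue)) \<le> int (card Tris)" using card_vc by linarith
  have b: "3 * int (card Tris) \<le> 2 * int (card (edges Tris glue))" using card_edges_ge by linarith
  from e a b have "int (card Tris) \<le> 8 * int g" by linarith
  then show ?thesis by linarith
qed

end

lemma delta_gen:
  fixes a b :: "hedge \<Rightarrow> real"
  assumes fin: "finite N" and nz: "\<forall>h\<in>N. a h \<noteq> 0"
  shows "\<exists>\<delta>>0. \<forall>h\<in>N. \<delta> * \<bar>b h\<bar> < \<bar>a h\<bar>"
proof (cases "N = {}")
  case True then show ?thesis by (intro exI[of _ 1]) simp
next
  case False
  define m where "m = Min ((\<lambda>h. \<bar>a h\<bar> / (\<bar>b h\<bar> + 1)) ` N)"
  have mpos: "m > 0" unfolding m_def using fin False nz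
    by (subst Min_gr_iff) (auto intro!: divide_pos_pos)
  have "\<forall>h\<in>N. (m/2) * \<bar>b h\<bar> < \<bar>a h\<bar>"
  proof
    fix h assume h: "h \<in> N"
    have "m \<le> \<bar>a h\<bar> / (\<bar>b h\<bar> + 1)" unfolding m_def using fin h by (intro Min_le) auto
    then have "m * (\<bar>b h\<bar> + 1) \<le> \<bar>a h\<bar>" by (simp add: le_divide_eq)
    moreover have "m * \<bar>b h\<bar> \<le> m * (\<bar>b h\<bar> + 1)" using mpos by simp
    moreover have "\<bar>a h\<bar> > 0" using nz h by simp
    ultimately show "(m/2) * \<bar>b h\<bar> < \<bar>a h\<bar>" by linarith
  qed
  then show ?thesis using mpos by (intro exI[of _ "m/2"]) simp
qed

theorem lemma8p9:
  fixes g :: nat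
  shows "\<exists>n::nat. \<forall>Tris hol glue W.
           flat_triangulation g Tris hol glue \<and> W \<subseteq> edges Tris glue \<longrightarrow>
           (\<exists>\<Delta>::multicurve.
              transverse_multicurve Tris glue \<Delta> \<and>
              (\<forall>e\<in>W. crossing_exits glue \<Delta> e \<noteq> {}) \<and>
              (\<forall>e\<in>W. (\<forall>h\<in>e. Re (hol h) \<noteq> 0) \<longrightarrow>
                        (\<forall>x\<in>crossing_exits glue \<Delta> e. Re (hol x) > 0)) \<and>
              (\<forall>e\<in>W. (\<forall>h\<in>e. Re (hol h) = 0) \<longrightarrow>
                        (\<exists>h0\<in>e. crossing_exits glue \<Delta> e = {h0})) \<and>
              (\<forall>e\<in>edges Tris glue. inter_num \<Delta> e \<le> int n))"
proof (intro exI[of _ "48 * g"] allI impI)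
  fix Tris hol glue W
  assume A: "flat_triangulation g Tris hol glue \<and> W \<subseteq> edges Tris glue"
  then have ft: "flat_triangulation g Tris hol glue" and WE: "W \<subseteq> edges Tris glue" by auto
  have fN: "finite {h\<in>hedges Tris. Re (hol h) \<noteq> 0}" using finH[OF ft] by simp
  have nN: "\<forall>h\<in>{h\<in>hedges Tris. Re (hol h) \<noteq> 0}. Re (hol h) \<noteq> 0" by simp
  obtain \<delta> where d0: "\<delta> > 0" and dH: "\<forall>h\<in>{h\<in>hedges Tris. Re (hol h) \<noteq> 0}. \<delta> * \<bar>Im (hol h)\<bar> < \<bar>Re (hol h)\<bar>"
    using delta_gen[OF fN nN, where b="\<lambda>h. Im (hol h)"] by blast
  define L where "L h = Re (hol h) + \<delta> * Im (hol h)" for h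
  have Lsign: "\<And>h. h \<in> hedges Tris \<Longrightarrow> Re (hol h) \<noteq> 0 \<Longrightarrow> (L h > 0 \<longleftrightarrow> Re (hol h) > 0) \<and> (L h < 0 \<longleftrightarrow> Re (hol h) < 0)"
  proof -
    fix h assume h: "h \<in> hedges Tris" "Re (hol h) \<noteq> 0"
    then have "\<delta> * \<bar>Im (hol h)\<bar> < \<bar>Re (hol h)\<bar>" using dH by blast
    then have "\<bar>\<delta> * Im (hol h)\<bar> < \<bar>Re (hol h)\<bar>" using d0 by (simp add: abs_mult)
    then have "- \<bar>Re (hol h)\<bar> < \<delta> * Im (hol h) \<and> \<delta> * Im (hol h) < \<bar>Re (hol h)\<bar>" by (simp add: abs_less_iff)
    then show "(L h > 0 \<longleftrightarrow> Re (hol h) > 0) \<and> (L h < 0 \<longleftrightarrow> Re (hol h) < 0)"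
      unfolding L_def using h(2) by (cases "Re (hol h) > 0") (auto simp: abs_if)
  qed
  have Lnz: "\<And>h. h \<in> hedges Tris \<Longrightarrow> L h \<noteq> 0"
  proof -
    fix h assume h: "h \<in> hedges Tris"
    show "L h \<noteq> 0"
    proof (cases "Re (hol h) = 0")
      case True
      have "hol h \<noteq> 0" using corner_Im[OF ft h] by simp
      have "Im (hol h) \<noteq> 0"
      proof
        assume "Im (hol h) = 0"
        then have "hol h = 0" using True by (simp add: complex_eq_iff)
        then show False using \<open>hol h \<noteq> 0\<close> by simp
      qed
      then show ?thesis using True d0 by (simp add: L_def)
    next
      case False then show ?thesis using Lsign[OF h False] by (cases "Re (hol h) > 0") auto
    qed
  qed
  have Lgl: "\<And>h. h \<in> hedges Tris \<Longrightarrow> L (glue h) = - L h"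
    using glue[OF ft] by (simp add: L_def)
  have Lsum: "\<And>t. t \<in> Tris \<Longrightarrow> L (t,0) + L (t,1) + L (t,2) = 0"
  proof -
    fix t assume t: "t \<in> Tris"
    have s: "hol (t,0) + hol (t,1) + hol (t,2) = 0" using tri[OF ft t] by simp
    have r: "Re (hol (t,0)) + Re (hol (t,1)) + Re (hol (t,2)) = 0" using arg_cong[OF s, of Re] by simp
    have i: "Im (hol (t,0)) + Im (hol (t,1)) + Im (hol (t,2)) = 0" using arg_cong[OF s, of Im] by simp
    have "L (t,0) + L (t,1) + L (t,2) = (Re (hol (t,0)) + Re (hol (t,1)) + Re (hol (t,2)))
           + \<delta> * (Im (hol (t,0)) + Im (hol (t,1)) + Im (hol (t,2)))"
      by (simp add: L_def algebra_simps)
    then show "L (t,0) + L (t,1) + L (t,2) = 0" using r i by simp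
  qed
  interpret dg Tris glue L
    by unfold_locales (use finT[OF ft] glue[OF ft] Lgl Lnz Lsum in auto)
  have edge_form: "\<And>e. e \<in> edges Tris glue \<Longrightarrow> \<exists>h\<in>hedges Tris. e = {h, glue h}"
    by (auto simp: edges_def)
  have ex_arc: "\<And>e. e \<in> W \<Longrightarrow> \<exists>a\<in>e. a \<in> hedges Tris \<and> L a > 0"
  proof -
    fix e assume "e \<in> W"
    then obtain h where h: "h \<in> hedges Tris" "e = {h, glue h}" using edge_form WE by blast
    show "\<exists>a\<in>e. a \<in> hedges Tris \<and> L a > 0"
    proof (cases "L h > 0")
      case True then show ?thesis using h by auto
    next
      case False
      then have "L (glue h) > 0" using Lnz[OF h(1)] Lgl[OF h(1)] by simp
      then show ?thesis using h glue[OF ft h(1)] by auto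
    qed
  qed
  define P where "P e c \<longleftrightarrow> transverse_closed_curve Tris glue c \<and> distinct (map fst c) \<and>
       (\<forall>x\<in>set c. L x > 0) \<and> (\<exists>a\<in>set c. a \<in> e)" for e c
  have exP: "\<And>e. e \<in> W \<Longrightarrow> \<exists>c. P e c"
  proof -
    fix e assume "e \<in> W"
    then obtain a where a: "a \<in> e" "a \<in> hedges Tris" "L a > 0" using ex_arc by blast
    obtain c where "transverse_closed_curve Tris glue c \<and> distinct (map fst c) \<and>
             (\<forall>x\<in>set c. L x > 0) \<and> a \<in> set c" using cycle[OF a(2,3)] by blast
    then show "\<exists>c. P e c" using a by (auto simp: P_def)
  qed
  define cyc where "cyc e = (SOME c. P e c)" for e
  have Pc: "\<And>e. e \<in> W \<Longrightarrow> P e (cyc e)" unfolding cyc_def using exP by (rule someI_ex)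
  have finE: "finite (edges Tris glue)" using finH[OF ft] by (simp add: edges_img[OF ft])
  have finW: "finite W" using finE WE finite_subset by blast
  obtain ws where ws: "set ws = W" "distinct ws" using finite_distinct_list[OF finW] by blast
  define D where "D = map (\<lambda>e. (1::int, cyc e)) ws"
  have CE: "crossing_exits glue D e = {h. \<exists>e'\<in>W. h \<in> set (cyc e') \<and> h \<in> e}" for e
  proof (rule set_eqI, rule iffI)
    fix x assume "x \<in> crossing_exits glue D e"
    then obtain w c h where x: "x = eff_exit glue w h" "(w,c) \<in> set D" "w \<noteq> 0" "h \<in> set c" "h \<in> e"
      unfolding crossing_exits_def by blast
    from x(2) obtain e' where e': "e' \<in> W" "w = 1" "c = cyc e'" using ws(1) unfolding D_def by auto
    have "x = h" using x(1) e'(2) by (simp add: eff_exit_def)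
    then show "x \<in> {h. \<exists>e'\<in>W. h \<in> set (cyc e') \<and> h \<in> e}" using x e' by blast
  next
    fix x assume "x \<in> {h. \<exists>e'\<in>W. h \<in> set (cyc e') \<and> h \<in> e}"
    then obtain e' where e': "e' \<in> W" "x \<in> set (cyc e')" "x \<in> e" by blast
    have m: "(1, cyc e') \<in> set D" using e'(1) ws(1) by (auto simp: D_def)
    have xe: "x = eff_exit glue 1 x" by (simp add: eff_exit_def)
    show "x \<in> crossing_exits glue D e" unfolding crossing_exits_def using m e' xe
      by (intro CollectI exI[of _ 1] exI[of _ "cyc e'"] exI[of _ x]) simp
  qed
  have ne: "\<forall>e\<in>W. crossing_exits glue D e \<noteq> {}"
  proof
    fix e assume e: "e \<in> W"
    then obtain a where "a \<in> set (cyc e)" "a \<in> e" using Pc[OF e] by (auto simp: P_def)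
    then have "a \<in> crossing_exits glue D e" using e unfolding CE by blast
    then show "crossing_exits glue D e \<noteq> {}" by blast
  qed
  have inH: "\<And>e' x. e' \<in> W \<Longrightarrow> x \<in> set (cyc e') \<Longrightarrow> x \<in> hedges Tris \<and> L x > 0"
    using Pc by (auto simp: P_def transverse_closed_curve_def)
  have main: "transverse_multicurve Tris glue D \<and>
              (\<forall>e\<in>W. crossing_exits glue D e \<noteq> {}) \<and>
              (\<forall>e\<in>W. (\<forall>h\<in>e. Re (hol h) \<noteq> 0) \<longrightarrow>
                        (\<forall>x\<in>crossing_exits glue D e. Re (hol x) > 0)) \<and>
              (\<forall>e\<in>W. (\<forall>h\<in>e. Re (hol h) = 0) \<longrightarrow>
                        (\<exists>h0\<in>e. crossing_exits glue D e = {h0})) \<and>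
              (\<forall>e\<in>edges Tris glue. inter_num D e \<le> int (48 * g))"
  proof (intro conjI)
    show "transverse_multicurve Tris glue D"
      unfolding transverse_multicurve_def D_def using Pc ws(1) by (auto simp: P_def)
    show "\<forall>e\<in>W. crossing_exits glue D e \<noteq> {}" by (rule ne)
    show "\<forall>e\<in>W. (\<forall>h\<in>e. Re (hol h) \<noteq> 0) \<longrightarrow> (\<forall>x\<in>crossing_exits glue D e. Re (hol x) > 0)"
    proof (intro ballI impI)
      fix e x assume e: "e \<in> W" and nv: "\<forall>h\<in>e. Re (hol h) \<noteq> 0" and x: "x \<in> crossing_exits glue D e"
      then obtain e' where e': "e' \<in> W" "x \<in> set (cyc e')" "x \<in> e" by (auto simp: CE)
      then have "x \<in> hedges Tris" "L x > 0" using inH by auto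
      then show "Re (hol x) > 0" using Lsign nv e'(3) by blast
    qed
    show "\<forall>e\<in>W. (\<forall>h\<in>e. Re (hol h) = 0) \<longrightarrow> (\<exists>h0\<in>e. crossing_exits glue D e = {h0})"
    proof (intro ballI impI)
      fix e assume e: "e \<in> W" and v: "\<forall>h\<in>e. Re (hol h) = 0"
      obtain h where h: "h \<in> hedges Tris" "e = {h, glue h}" using edge_form WE e by blast
      define h0 where "h0 = (if L h > 0 then h else glue h)"
      have h0e: "h0 \<in> e" using h by (simp add: h0_def)
      have sub: "crossing_exits glue D e \<subseteq> {h0}"
      proof
        fix x assume x: "x \<in> crossing_exits glue D e"
        then obtain e' where e': "e' \<in> W" "x \<in> set (cyc e')" "x \<in> e" by (auto simp: CE)
        then have Lx: "L x > 0" using inH by auto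
        have "x = h \<or> x = glue h" using e'(3) h by auto
        then show "x \<in> {h0}"
        proof
          assume "x = h" then show ?thesis using Lx by (simp add: h0_def)
        next
          assume "x = glue h"
          then have "L h < 0" using Lx Lgl[OF h(1)] by simp
          then show ?thesis using \<open>x = glue h\<close> by (simp add: h0_def)
        qed
      qed
      have "crossing_exits glue D e = {h0}" using sub ne e by blast
      then show "\<exists>h0\<in>e. crossing_exits glue D e = {h0}" using h0e by blast
    qed
    show "\<forall>e\<in>edges Tris glue. inter_num D e \<le> int (48 * g)"
    proof
      fix e assume e: "e \<in> edges Tris glue"
      obtain h where h: "h \<in> hedges Tris" "e = {h, glue h}" using edge_form e by blast
      have ce: "card e \<le> 2" using h card2 by simp
      have fe: "finite e" using h by simp
      have each: "\<And>e'. e' \<in> W \<Longrightarrow> int (length (filter (\<lambda>x. x \<in> e) (cyc e'))) \<le> 2"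
      proof -
        fix e' assume e': "e' \<in> W"
        have "distinct (cyc e')" using Pc[OF e'] by (auto simp: P_def distinct_map)
        then have "length (filter (\<lambda>x. x \<in> e) (cyc e')) = card (set (filter (\<lambda>x. x \<in> e) (cyc e')))"
          by (intro distinct_card[symmetric] distinct_filter)
        also have "\<dots> \<le> card e" using fe by (intro card_mono) auto
        finally show "int (length (filter (\<lambda>x. x \<in> e) (cyc e'))) \<le> 2" using ce by simp
      qed
      have "inter_num D e = sum_list (map (\<lambda>e'. int (length (filter (\<lambda>x. x \<in> e) (cyc e')))) ws)"
        by (simp add: inter_num_def D_def o_def)
      also have "\<dots> = (\<Sum>e'\<in>W. int (length (filter (\<lambda>x. x \<in> e) (cyc e'))))"
        using sum_list_distinct_conv_sum_set[OF ws(2)] ws(1) by simp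
      also have "\<dots> \<le> of_nat (card W) * 2" by (rule sum_bounded_above) (rule each)
      also have "\<dots> \<le> int (card (edges Tris glue)) * 2" using card_mono[OF finE WE] by simp
      also have "\<dots> \<le> int (3 * card Tris) * 2" using card_edges_le[OF ft] by simp
      also have "\<dots> \<le> int (48 * g)" using card_T_bound[OF ft] by simp
      finally show "inter_num D e \<le> int (48 * g)" .
    qed
  qed
  show "\<exists>\<Delta>::multicurve.
              transverse_multicurve Tris glue \<Delta> \<and>
              (\<forall>e\<in>W. crossing_exits glue \<Delta> e \<noteq> {}) \<and>
              (\<forall>e\<in>W. (\<forall>h\<in>e. Re (hol h) \<noteq> 0) \<longrightarrow>
                        (\<forall>x\<in>crossing_exits glue \<Delta> e. Re (hol x) > 0)) \<and>
              (\<forall>e\<in>W. (\<forall>h\<in>e. Re (hol h) = 0) \<longrightarrow>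
                        (\<exists>h0\<in>e. crossing_exits glue \<Delta> e = {h0})) \<and>
              (\<forall>e\<in>edges Tris glue. inter_num \<Delta> e \<le> int (48 * g))"
    using main by blast
qed

end
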